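(* Let $\gamma>0$ and $\beta:\mathcal S\to(0,+\infty)$ of class $\mathcal C^1$ satisfy $x\beta_x(x,y)+\beta(x,y)>0$ for all $(x,y)\in\mathcal S$. Consider the uncontrolled BF-SIR model with initial condition $(x_0,y_0)\in\mathcal S$, $y_0>0$. Then: (i) if $R(x_0,y_0)\le1$, then $t\mapsto y(t)$ is strictly decreasing on $[0,\infty)$; (ii) if $R(x_0,y_0)>1$, then there exists a finite time $\hat t$ such that $t\mapsto y(t)$ is strictly increasing on $[0,\hat t]$ and strictly decreasing on $[\hat t,\infty)$.
   Context: $\mathcal S=\{(x,y)\in\mathbb R^2_+: x+y\le1\}$. Reproduction number $R(x,y)=\frac1\gamma\beta(x,y)x$. The uncontrolled BF-SIR model is $\dot x=-\gamma R(x,y)y$, $\dot y=\gamma(R(x,y)-1)y$; for every initial condition in $\mathcal S$ it has a unique $\mathcal C^1$ solution remaining in $\mathcal S$. *)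

theory Defs
  imports "HOL-Analysis.Analysis"
begin

definition SIR_S :: "(real \<times> real) set" where
  "SIR_S = {(x, y). 0 \<le> x \<and> 0 \<le> y \<and> x + y \<le> 1}"

definition repr_num :: "real \<Rightarrow> (real \<times> real \<Rightarrow> real) \<Rightarrow> real \<Rightarrow> real \<Rightarrow> real" where
  "repr_num \<gamma> \<beta> x y = (1 / \<gamma>) * \<beta> (x, y) * x"

definition C1_on_with_partials ::
  "(real \<times> real \<Rightarrow> real) \<Rightarrow> (real \<times> real \<Rightarrow> real) \<Rightarrow> (real \<times> real \<Rightarrow> real) \<Rightarrow> (real \<times> real) set \<Rightarrow> bool" where
  "C1_on_with_partials f fx fy A \<longleftrightarrow>
     (\<forall>p\<in>A. (f has_derivative (\<lambda>(h, k). fx p * h + fy p * k)) (at p within A))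
     \<and> continuous_on A fx \<and> continuous_on A fy"

end

theory Submission
  imports Defs
begin

lemma right_neg_deriv:
  fixes f :: "real \<Rightarrow> real"
  assumes d: "(f has_real_derivative D) (at t within {t..})" and D: "D < 0"
  shows "\<exists>d>0. \<forall>u. t < u \<and> u < t + d \<longrightarrow> f u < f t"
proof -
  have "((\<lambda>u. (f u - f t) / (u - t)) \<longlongrightarrow> D) (at t within {t..})"
    using d by (simp add: has_field_derivative_iff)
  then have "\<forall>\<^sub>F u in at t within {t..}. (f u - f t) / (u - t) < 0"
    using D by (rule order_tendstoD(2))
  then obtain d where d0: "d > 0" and dd: "\<forall>u\<in>{t..}. u \<noteq> t \<and> dist u t < d \<longrightarrow> (f u - f t) / (u - t) < 0"
    unfolding eventually_at by blast
  show ?thesis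
  proof (intro exI[of _ d] conjI allI impI)
    fix u assume u: "t < u \<and> u < t + d"
    then have "(f u - f t) / (u - t) < 0" using dd by (auto simp: dist_real_def)
    with u show "f u < f t" by (simp add: divide_less_0_iff)
  qed (use d0 in auto)
qed

lemma right_cont_neg:
  fixes f :: "real \<Rightarrow> real"
  assumes c: "continuous (at t within {t..}) f" and n: "f t < 0"
  shows "\<exists>d>0. \<forall>u. t \<le> u \<and> u < t + d \<longrightarrow> f u < 0"
proof -
  have "(f \<longlongrightarrow> f t) (at t within {t..})" using c by (simp add: continuous_within)
  then have "\<forall>\<^sub>F u in at t within {t..}. f u < 0"
    using n by (rule order_tendstoD(2))
  then obtain d where d0: "d > 0" and dd: "\<forall>u\<in>{t..}. u \<noteq> t \<and> dist u t < d \<longrightarrow> f u < 0"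
    unfolding eventually_at by blast
  show ?thesis
  proof (intro exI[of _ d] conjI allI impI)
    fix u assume u: "t \<le> u \<and> u < t + d"
    show "f u < 0"
    proof (cases "u = t")
      case True then show ?thesis using n by simp
    next
      case False then show ?thesis using dd u by (auto simp: dist_real_def)
    qed
  qed (use d0 in auto)
qed

lemma within_to_at:
  fixes f :: "real \<Rightarrow> real"
  assumes "(f has_real_derivative D) (at t within {0..})" "t > 0"
  shows "(f has_real_derivative D) (at t)"
proof -
  have "t \<in> interior {0..}" using assms(2) by simp
  then have "at t within {0..} = at t" by (rule at_within_interior)
  then show ?thesis using assms(1) by simp
qed

theorem proposition2:
  fixes \<gamma> :: real and \<beta> \<beta>x \<beta>y :: "real \<times> real \<Rightarrow> real"
    and x y :: "real \<Rightarrow> real" and x0 y0 :: real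
  assumes gamma_pos: "\<gamma> > 0"
    and beta_pos: "\<forall>p\<in>SIR_S. \<beta> p > 0"
    and beta_C1: "C1_on_with_partials \<beta> \<beta>x \<beta>y SIR_S"
    and beta_cond: "\<forall>a b. (a, b) \<in> SIR_S \<longrightarrow> a * \<beta>x (a, b) + \<beta> (a, b) > 0"
    and init_in: "(x0, y0) \<in> SIR_S" and y0_pos: "y0 > 0"
    and x_init: "x 0 = x0" and y_init: "y 0 = y0"
    and stays: "\<forall>t\<ge>0. (x t, y t) \<in> SIR_S"
    and ode_x: "\<forall>t\<ge>0. (x has_real_derivative
                   (- \<gamma> * repr_num \<gamma> \<beta> (x t) (y t) * y t)) (at t within {0..})"
    and ode_y: "\<forall>t\<ge>0. (y has_real_derivative
                   (\<gamma> * (repr_num \<gamma> \<beta> (x t) (y t) - 1) * y t)) (at t within {0..})"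
  shows "(repr_num \<gamma> \<beta> x0 y0 \<le> 1 \<longrightarrow>
            (\<forall>s t. 0 \<le> s \<and> s < t \<longrightarrow> y t < y s))
       \<and> (repr_num \<gamma> \<beta> x0 y0 > 1 \<longrightarrow>
            (\<exists>th::real. 0 \<le> th \<and>
               (\<forall>s t. 0 \<le> s \<and> s < t \<and> t \<le> th \<longrightarrow> y s < y t) \<and>
               (\<forall>s t. th \<le> s \<and> s < t \<longrightarrow> y t < y s)))"
proof -
  define g where "g t = \<beta> (x t, y t) * x t - \<gamma>" for t
  have rep: "repr_num \<gamma> \<beta> a b \<le> 1 \<longleftrightarrow> \<beta> (a, b) * a \<le> \<gamma>" for a b
    using gamma_pos by (simp add: repr_num_def field_simps)
  have dx: "(x has_real_derivative (- (\<beta> (x t, y t) * x t) * y t)) (at t within {0..})"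
    if "t \<ge> 0" for t
    using ode_x that gamma_pos by (simp add: repr_num_def)
  have dy: "(y has_real_derivative (g t * y t)) (at t within {0..})" if "t \<ge> 0" for t
  proof -
    have "\<gamma> * (repr_num \<gamma> \<beta> (x t) (y t) - 1) * y t = g t * y t"
      using gamma_pos by (simp add: repr_num_def g_def field_simps)
    then show ?thesis using ode_y that by metis
  qed
  have bder: "\<forall>p\<in>SIR_S. (\<beta> has_derivative (\<lambda>(h, k). \<beta>x p * h + \<beta>y p * k)) (at p within SIR_S)"
    using beta_C1 by (simp add: C1_on_with_partials_def)
  define Dg where "Dg t = (\<beta>x (x t, y t) * (- (\<beta> (x t, y t) * x t) * y t) + \<beta>y (x t, y t) * (g t * y t)) * x t
      + \<beta> (x t, y t) * (- (\<beta> (x t, y t) * x t) * y t)" for t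
  have dg: "(g has_real_derivative Dg t) (at t within {0..})" if t: "t \<ge> 0" for t
  proof -
    let ?X = "- (\<beta> (x t, y t) * x t) * y t"
    let ?Y = "g t * y t"
    have P: "((\<lambda>s. (x s, y s)) has_derivative (\<lambda>h. (?X * h, ?Y * h))) (at t within {0..})"
      using has_derivative_Pair[OF dx[OF t, unfolded has_field_derivative_def]
          dy[OF t, unfolded has_field_derivative_def]] by simp
    have "((\<lambda>s. \<beta> (x s, y s)) has_derivative
        (\<lambda>h. (\<lambda>(h, k). \<beta>x (x t, y t) * h + \<beta>y (x t, y t) * k) (?X * h, ?Y * h))) (at t within {0..})"
    proof (rule has_derivative_in_compose2[OF _ _ _ P])
      show "\<And>p. p \<in> SIR_S \<Longrightarrow> (\<beta> has_derivative (\<lambda>(h, k). \<beta>x p * h + \<beta>y p * k)) (at p within SIR_S)"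
        using bder by blast
      show "(\<lambda>s. (x s, y s)) ` {0..} \<subseteq> SIR_S" using stays by auto
      show "t \<in> {0..}" using t by simp
    qed
    then have B: "((\<lambda>s. \<beta> (x s, y s)) has_real_derivative
        (\<beta>x (x t, y t) * ?X + \<beta>y (x t, y t) * ?Y)) (at t within {0..})"
      unfolding has_field_derivative_def
      by (rule has_derivative_eq_rhs) (auto simp: algebra_simps)
    have "((\<lambda>s. \<beta> (x s, y s) * x s - \<gamma>) has_real_derivative
        ((\<beta>x (x t, y t) * ?X + \<beta>y (x t, y t) * ?Y) * x t + \<beta> (x t, y t) * ?X)) (at t within {0..})"
      by (auto intro!: derivative_eq_intros B dx[OF t])
    then show ?thesis unfolding Dg_def g_def[abs_def] .
  qed
  have Dg_neg: "Dg t < 0" if t: "t \<ge> 0" and g0: "g t = 0" and yp: "y t > 0" for t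
  proof -
    have b: "\<beta> (x t, y t) * x t = \<gamma>" using g0 by (simp add: g_def)
    have "Dg t = (\<beta>x (x t, y t) * (- \<gamma> * y t) + \<beta>y (x t, y t) * (0 * y t)) * x t
      + \<beta> (x t, y t) * (- \<gamma> * y t)"
      unfolding Dg_def g0 b by (simp only: minus_mult_left)
    also have "\<dots> = - \<gamma> * y t * (x t * \<beta>x (x t, y t) + \<beta> (x t, y t))"
      by (simp add: ring_distribs mult.assoc mult.left_commute)
    finally have "Dg t = - \<gamma> * y t * (x t * \<beta>x (x t, y t) + \<beta> (x t, y t))" .
    moreover have "x t * \<beta>x (x t, y t) + \<beta> (x t, y t) > 0" using beta_cond stays t by auto
    ultimately show ?thesis using gamma_pos yp by (simp add: mult_pos_pos)
  qed
  have cont_on: "continuous_on {0..} f" if "\<And>t. t \<ge> 0 \<Longrightarrow> (f has_real_derivative D t) (at t within {0..})"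
    for f :: "real \<Rightarrow> real" and D
    unfolding continuous_on_eq_continuous_within
    using that by (auto intro: DERIV_continuous)
  have cx: "continuous_on {0..} x" by (rule cont_on[OF dx])
  have cy: "continuous_on {0..} y" by (rule cont_on[OF dy])
  have cg: "continuous_on {0..} g" by (rule cont_on[OF dg])
  have xnn: "x t \<ge> 0" if "t \<ge> 0" for t using stays that by (auto simp: SIR_S_def)
  have bnn: "\<beta> (x t, y t) > 0" if "t \<ge> 0" for t using stays that beta_pos by auto
  have x1: "x t \<le> 1" if "t \<ge> 0" for t
  proof -
    have "(x t, y t) \<in> SIR_S" using stays that by blast
    then show ?thesis unfolding SIR_S_def by simp
  qed
  have ypos: "y t > 0" if t: "t \<ge> 0" for t
  proof (rule ccontr)
    assume "\<not> y t > 0"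
    define A where "A = {0..t} \<inter> y -` {..0}"
    have tA: "t \<in> A" using \<open>\<not> y t > 0\<close> t by (auto simp: A_def)
    have clA: "closed A" unfolding A_def
      by (rule continuous_closed_preimage) (auto intro: continuous_on_subset[OF cy])
    have bA: "bdd_below A" by (auto simp: A_def bdd_below_def)
    define t1 where "t1 = Inf A"
    have t1A: "t1 \<in> A" unfolding t1_def using closed_contains_Inf[OF _ bA clA] tA by blast
    have below: "y s > 0" if "0 \<le> s" "s < t1" for s
    proof (rule ccontr)
      assume "\<not> y s > 0"
      then have "s \<in> A" using that t1A by (auto simp: A_def)
      then have "t1 \<le> s" unfolding t1_def using bA by (rule cInf_lower)
      with that show False by simp
    qed
    have t1pos: "t1 > 0"
    proof -
      have "t1 \<ge> 0" "y t1 \<le> 0" using t1A by (auto simp: A_def)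
      moreover have "t1 \<noteq> 0" using \<open>y t1 \<le> 0\<close> y_init y0_pos by auto
      ultimately show ?thesis by simp
    qed
    define z where "z s = y s * exp (\<gamma> * s)" for s
    have "z 0 \<le> z t1"
    proof (rule DERIV_nonneg_imp_increasing_open[of 0 t1 z])
      show "0 \<le> t1" using t1pos by simp
      fix s assume s: "0 < s" "s < t1"
      have ds: "(y has_real_derivative (g s * y s)) (at s)"
        using within_to_at[OF dy] s by simp
      have "(z has_real_derivative (g s * y s * exp (\<gamma> * s) + y s * (exp (\<gamma> * s) * \<gamma>))) (at s)"
        unfolding z_def[abs_def] by (auto intro!: derivative_eq_intros ds)
      moreover have "g s * y s * exp (\<gamma> * s) + y s * (exp (\<gamma> * s) * \<gamma>)
          = \<beta> (x s, y s) * x s * y s * exp (\<gamma> * s)"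
        by (simp add: g_def algebra_simps)
      moreover have "\<beta> (x s, y s) * x s * y s * exp (\<gamma> * s) \<ge> 0"
        using bnn[of s] xnn[of s] below[of s] s by simp
      ultimately show "\<exists>l. (z has_real_derivative l) (at s) \<and> l \<ge> 0" by metis
    next
      show "continuous_on {0..t1} z" unfolding z_def[abs_def]
        by (intro continuous_intros continuous_on_subset[OF cy]) auto
    qed
    then have "y t1 * exp (\<gamma> * t1) \<ge> y0" using y_init by (simp add: z_def)
    moreover have "y t1 \<le> 0" using t1A by (auto simp: A_def)
    ultimately have "y0 \<le> 0" by (smt (verit) exp_gt_zero mult_nonpos_nonneg)
    with y0_pos show False by simp
  qed
  have incr: "y a < y b" if "0 \<le> a" "a < b" "\<And>s. a < s \<Longrightarrow> s < b \<Longrightarrow> g s > 0" for a b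
  proof (rule DERIV_pos_imp_increasing_open[of a b y, OF \<open>a < b\<close>])
    fix s assume s: "a < s" "s < b"
    have "(y has_real_derivative (g s * y s)) (at s)" using within_to_at[OF dy] s that by simp
    moreover have "g s * y s > 0" using that(3)[OF s] ypos[of s] s that by simp
    ultimately show "\<exists>l. (y has_real_derivative l) (at s) \<and> l > 0" by blast
  qed (rule continuous_on_subset[OF cy], use that in auto)
  have decr: "y b < y a" if "0 \<le> a" "a < b" "\<And>s. a < s \<Longrightarrow> s < b \<Longrightarrow> g s < 0" for a b
  proof -
    have "y a > y b"
    proof (rule DERIV_neg_imp_decreasing_open[of a b y, OF \<open>a < b\<close>])
      fix s assume s: "a < s" "s < b"
      have "(y has_real_derivative (g s * y s)) (at s)" using within_to_at[OF dy] s that by simp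
      moreover have "g s * y s < 0" using that(3)[OF s] ypos[of s] s that by (simp add: mult_neg_pos)
      ultimately show "\<exists>l. (y has_real_derivative l) (at s) \<and> l < 0" by blast
    qed (rule continuous_on_subset[OF cy], use that in auto)
    then show ?thesis by simp
  qed
  have stay_neg: "g t1 < 0" if t0: "t0 \<ge> 0" "g t0 \<le> 0" and t1: "t0 < t1" for t0 t1
  proof (rule ccontr)
    assume "\<not> g t1 < 0"
    then have gt1: "g t1 \<ge> 0" by simp
    have "\<exists>d>0. \<forall>u. t0 < u \<and> u < t0 + d \<longrightarrow> g u < 0"
    proof (cases "g t0 = 0")
      case True
      have "(g has_real_derivative Dg t0) (at t0 within {t0..})"
        by (rule has_field_derivative_subset[OF dg[OF t0(1)]]) (use t0 in auto)
      from right_neg_deriv[OF this Dg_neg[OF t0(1) True ypos[OF t0(1)]]] True show ?thesis by simp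
    next
      case False
      have "continuous (at t0 within {t0..}) g"
        by (rule DERIV_continuous[OF has_field_derivative_subset[OF dg[OF t0(1)]]]) (use t0 in auto)
      from right_cont_neg[OF this] False t0 show ?thesis by force
    qed
    then obtain d where d: "d > 0" "\<And>u. t0 < u \<Longrightarrow> u < t0 + d \<Longrightarrow> g u < 0" by blast
    define a where "a = t0 + min d (t1 - t0) / 2"
    have a12: "t0 < a" "a < t1" "a < t0 + d" using d(1) t1 unfolding a_def min_def by (auto simp: field_simps)
    have a: "t0 < a" "a < t1" "g a < 0" using a12 d(2) by auto
    define B where "B = {a..t1} \<inter> g -` {0..}"
    have t1B: "t1 \<in> B" using gt1 a by (auto simp: B_def)
    have clB: "closed B" unfolding B_def
      by (rule continuous_closed_preimage) (use a t0 in \<open>auto intro: continuous_on_subset[OF cg]\<close>)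
    have bB: "bdd_below B" by (auto simp: B_def bdd_below_def)
    define s where "s = Inf B"
    have sB: "s \<in> B" unfolding s_def using closed_contains_Inf[OF _ bB clB] t1B by blast
    have sa: "a \<le> s" "s \<le> t1" "g s \<ge> 0" using sB by (auto simp: B_def)
    have lower: "s \<le> u" if "u \<in> B" for u unfolding s_def using that bB by (rule cInf_lower)
    have gs0: "g s = 0"
    proof -
      have "\<exists>u\<ge>a. u \<le> s \<and> g u = 0"
        by (rule IVT') (use a sa t0 in \<open>auto intro: continuous_on_subset[OF cg]\<close>)
      then obtain u where u: "a \<le> u" "u \<le> s" "g u = 0" by blast
      then have "u \<in> B" using sa by (auto simp: B_def)
      then have "s \<le> u" by (rule lower)
      with u show ?thesis by simp
    qed
    have sgt: "s > a" using gs0 a sa by (cases "s = a") auto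
    have spos: "s > 0" using sgt a t0 by simp
    have "(g has_real_derivative Dg s) (at s)" using within_to_at[OF dg] spos by simp
    from DERIV_neg_dec_left[OF this Dg_neg[OF _ gs0 ypos]] spos
    obtain e where e: "e > 0" "\<And>h. h > 0 \<Longrightarrow> h < e \<Longrightarrow> g s < g (s - h)" by auto
    define h where "h = min e (s - a) / 2"
    have h: "h > 0" "h < e" "a \<le> s - h" "s - h < s" using e sgt unfolding h_def min_def by (auto simp: field_simps)
    have "g (s - h) > 0" using e(2)[OF h(1,2)] gs0 by simp
    then have "s - h \<in> B" using h sa by (auto simp: B_def)
    then have "s \<le> s - h" by (rule lower)
    with h show False by simp
  qed
  show ?thesis
  proof (intro conjI impI)
    assume "repr_num \<gamma> \<beta> x0 y0 \<le> 1"
    then have g0: "g 0 \<le> 0" using rep x_init y_init by (simp add: g_def)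
    show "\<forall>s t. 0 \<le> s \<and> s < t \<longrightarrow> y t < y s"
    proof (intro allI impI)
      fix s t :: real assume st: "0 \<le> s \<and> s < t"
      show "y t < y s" by (rule decr) (use st stay_neg[OF _ g0] in auto)
    qed
  next
    assume "repr_num \<gamma> \<beta> x0 y0 > 1"
    then have g0: "g 0 > 0" using rep[of x0 y0] x_init y_init by (simp add: g_def)
    have ex: "\<exists>t\<ge>0. g t \<le> 0"
    proof (rule ccontr)
      assume "\<not> ?thesis"
      then have gp: "g t > 0" if "t \<ge> 0" for t using that by force
      have yge: "y t \<ge> y0" if "t \<ge> 0" for t
      proof (cases "t = 0")
        case True then show ?thesis using y_init by simp
      next
        case False
        then have "y 0 < y t" using that by (intro incr) (auto intro: gp)
        then show ?thesis using y_init by simp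
      qed
      define T where "T = 2 / (\<gamma> * y0)"
      have Tpos: "T > 0" using gamma_pos y0_pos by (simp add: T_def)
      define w where "w t = x t + \<gamma> * y0 * t" for t
      have "w T \<le> w 0"
      proof (rule DERIV_nonpos_imp_decreasing_open[of 0 T w])
        show "0 \<le> T" using Tpos by simp
        fix s assume s: "0 < s" "s < T"
        have ds: "(x has_real_derivative (- (\<beta> (x s, y s) * x s) * y s)) (at s)"
          using within_to_at[OF dx] s by simp
        have "(w has_real_derivative (- (\<beta> (x s, y s) * x s) * y s + \<gamma> * y0)) (at s)"
          unfolding w_def[abs_def] by (auto intro!: derivative_eq_intros ds)
        moreover have "- (\<beta> (x s, y s) * x s) * y s + \<gamma> * y0 \<le> 0"
        proof -
          have "\<beta> (x s, y s) * x s \<ge> \<gamma>" using gp[of s] s by (simp add: g_def)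
          moreover have "y s \<ge> y0" using yge[of s] s by simp
          ultimately have "\<gamma> * y0 \<le> (\<beta> (x s, y s) * x s) * y s"
            using gamma_pos y0_pos by (intro mult_mono) auto
          then show ?thesis by simp
        qed
        ultimately show "\<exists>l. (w has_real_derivative l) (at s) \<and> l \<le> 0" by blast
      next
        show "continuous_on {0..T} w" unfolding w_def[abs_def]
          by (intro continuous_intros continuous_on_subset[OF cx]) auto
      qed
      then have "x T + 2 \<le> x 0" using gamma_pos y0_pos by (simp add: w_def T_def)
      moreover have "x T \<ge> 0" using xnn Tpos by simp
      moreover have "x 0 \<le> 1" using x1 by simp
      ultimately show False by simp
    qed
    define C where "C = {0..} \<inter> g -` {..0}"
    have clC: "closed C" unfolding C_def
      by (rule continuous_closed_preimage[OF cg]) auto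
    have bC: "bdd_below C" by (auto simp: C_def bdd_below_def)
    have neC: "C \<noteq> {}" using ex by (auto simp: C_def)
    define th where "th = Inf C"
    have thC: "th \<in> C" unfolding th_def by (rule closed_contains_Inf[OF neC bC clC])
    have lowC: "th \<le> u" if "u \<in> C" for u unfolding th_def using that bC by (rule cInf_lower)
    have th0: "th \<ge> 0" "g th \<le> 0" using thC by (auto simp: C_def)
    have gpos: "g u > 0" if "0 \<le> u" "u < th" for u
    proof (rule ccontr)
      assume "\<not> g u > 0"
      then have "u \<in> C" using that by (auto simp: C_def)
      then have "th \<le> u" by (rule lowC)
      with that show False by simp
    qed
    show "\<exists>th::real. 0 \<le> th \<and>
               (\<forall>s t. 0 \<le> s \<and> s < t \<and> t \<le> th \<longrightarrow> y s < y t) \<and>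
               (\<forall>s t. th \<le> s \<and> s < t \<longrightarrow> y t < y s)"
    proof (intro exI[of _ th] conjI allI impI)
      show "0 \<le> th" by (rule th0)
    next
      fix s t :: real assume st: "0 \<le> s \<and> s < t \<and> t \<le> th"
      show "y s < y t" by (rule incr) (use st gpos in auto)
    next
      fix s t :: real assume st: "th \<le> s \<and> s < t"
      show "y t < y s" by (rule decr) (use st th0 stay_neg[of th] in auto)
    qed
  qed
qed

end
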